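(* Let $g$ be self-neglecting and let $f\in\Gamma_\alpha(g)$. (i) If $g$ is ultimately decreasing and $\alpha<0$, then $f$ is tail equivalent (i.e. $f(t)/\tilde f(t)\to1$ as $t\to\infty$) to a function $\tilde f$ that is ultimately decreasing. (ii) If $g$ is ultimately increasing and $\alpha>0$, then $f$ is tail equivalent to a function that is ultimately increasing.
   Context: For $\alpha\in\mathbb{R}$ and a positive measurable function $g$, an ultimately positive measurable function $f:\mathbb{R}\to\mathbb{R}$ belongs to $\Gamma_\alpha(g)$ if $\lim_{t\to\infty} f(t+xg(t))/f(t)=e^{\alpha x}$ for all $x\in\mathbb{R}$. A measurable $g:\mathbb{R}\to(0,\infty)$ is self-neglecting if $g(t)/t\to0$ and $g(t+xg(t))/g(t)\to1$ locally uniformly in $x\in\mathbb{R}$ as $t\to\infty$. *)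

theory Defs
  imports "HOL-Analysis.Analysis"
begin

definition self_neglecting :: "(real \<Rightarrow> real) \<Rightarrow> bool" where
  "self_neglecting g \<longleftrightarrow>
     g \<in> borel_measurable borel \<and> (\<forall>t. g t > 0) \<and>
     ((\<lambda>t. g t / t) \<longlongrightarrow> 0) at_top \<and>
     (\<forall>a b. \<forall>e>0. eventually (\<lambda>t. \<forall>x\<in>{a..b}. \<bar>g (t + x * g t) / g t - 1\<bar> < e) at_top)"

definition Gamma :: "real \<Rightarrow> (real \<Rightarrow> real) \<Rightarrow> (real \<Rightarrow> real) set" where
  "Gamma \<alpha> g = {f. f \<in> borel_measurable borel \<and> eventually (\<lambda>t. f t > 0) at_top \<and>
     (\<forall>x. ((\<lambda>t. f (t + x * g t) / f t) \<longlongrightarrow> exp (\<alpha> * x)) at_top)}"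

definition ult_decreasing :: "(real \<Rightarrow> real) \<Rightarrow> bool" where
  "ult_decreasing h \<longleftrightarrow> (\<exists>T. \<forall>s t. T \<le> s \<longrightarrow> s \<le> t \<longrightarrow> h t \<le> h s)"

definition ult_increasing :: "(real \<Rightarrow> real) \<Rightarrow> bool" where
  "ult_increasing h \<longleftrightarrow> (\<exists>T. \<forall>s t. T \<le> s \<longrightarrow> s \<le> t \<longrightarrow> h s \<le> h t)"

definition tail_equivalent :: "(real \<Rightarrow> real) \<Rightarrow> (real \<Rightarrow> real) \<Rightarrow> bool" where
  "tail_equivalent f h \<longleftrightarrow> ((\<lambda>t. f t / h t) \<longlongrightarrow> 1) at_top"

end

theory Submission
  imports Defs
begin


lemma affine_meas:
  fixes B :: "real set" and c t :: real
  assumes B: "B \<in> sets borel" and c: "c > 0"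
  shows "emeasure lborel B = c * emeasure lborel {x. t + c * x \<in> B}"
proof -
  have m: "indicator B \<in> borel_measurable borel" using B by simp
  have "emeasure lborel B = (\<integral>\<^sup>+x. indicator B x \<partial>lborel)" using B by simp
  also have "\<dots> = \<bar>c\<bar> * (\<integral>\<^sup>+x. indicator B (t + c * x) \<partial>lborel)"
    by (rule nn_integral_real_affine[OF m]) (use c in auto)
  also have "(\<lambda>x. indicator B (t + c * x) :: ennreal) = indicator {x. t + c * x \<in> B}"
    by (auto simp: indicator_def)
  also have "(\<integral>\<^sup>+x. indicator {x. t + c * x \<in> B} x \<partial>lborel) = emeasure lborel {x. t + c * x \<in> B}"
  proof (rule nn_integral_indicator)
    have "(\<lambda>x. t + c * x) \<in> borel_measurable borel" by simp
    then have "(\<lambda>x. t + c * x) -` B \<inter> space borel \<in> sets borel" using B by (rule measurable_sets)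
    then show "{x. t + c * x \<in> B} \<in> sets lborel" by (simp add: vimage_def)
  qed
  finally show ?thesis using c by simp
qed

lemma meas_pw:
  fixes P :: "nat \<Rightarrow> real \<Rightarrow> bool" and a b e :: real
  assumes meas: "\<And>n. {u\<in>{a..b}. P n u} \<in> sets lborel"
  and pw: "\<And>u. u \<in> {a..b} \<Longrightarrow> eventually (\<lambda>n. P n u) sequentially"
  and ab: "a \<le> b" and e: "e > 0"
  shows "eventually (\<lambda>n. measure lborel {u\<in>{a..b}. P n u} > b - a - e) sequentially"
proof -
  define E where "E N = (\<Inter>n. {u\<in>{a..b}. N \<le> n \<longrightarrow> P n u})" for N
  have Emeas: "E N \<in> sets lborel" for N
  proof -
    have *: "{u\<in>{a..b}. N \<le> n \<longrightarrow> P n u} \<in> sets lborel" for n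
    proof -
      have "{u\<in>{a..b}. N \<le> n \<longrightarrow> P n u} = (if N \<le> n then {u\<in>{a..b}. P n u} else {a..b})"
        by auto
      then show ?thesis using meas[of n] by simp
    qed
    show ?thesis unfolding E_def by (rule sets.countable_INT) (use * in blast)+
  qed
  have inc: "incseq E" unfolding incseq_def E_def by force
  have Un: "(\<Union>N. E N) = {a..b}"
  proof
    show "(\<Union>N. E N) \<subseteq> {a..b}" unfolding E_def by blast
    show "{a..b} \<subseteq> (\<Union>N. E N)"
    proof
      fix u assume u: "u \<in> {a..b}"
      then obtain N where "\<forall>n\<ge>N. P n u" using pw[of u] by (auto simp: eventually_sequentially)
      then have "u \<in> E N" using u unfolding E_def by blast
      then show "u \<in> (\<Union>N. E N)" by blast
    qed
  qed
  have "(\<lambda>N. measure lborel (E N)) \<longlonglongrightarrow> measure lborel (\<Union>N. E N)"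
    by (rule Lim_measure_incseq) (use Emeas inc Un ab in auto)
  then have "(\<lambda>N. measure lborel (E N)) \<longlonglongrightarrow> b - a" using Un ab by simp
  then have ev: "eventually (\<lambda>N. measure lborel (E N) > b - a - e) sequentially"
    using e by (intro order_tendstoD(1)) auto
  have Iab: "{a..b} \<in> fmeasurable lborel" by (rule fmeasurable_compact) simp
  have fm: "{u\<in>{a..b}. P n u} \<in> fmeasurable lborel" for n
    by (rule fmeasurableI2[OF Iab]) (use meas in blast)+
  have le: "measure lborel (E n) \<le> measure lborel {u\<in>{a..b}. P n u}" for n
  proof (rule measure_mono_fmeasurable)
    show "E n \<subseteq> {u\<in>{a..b}. P n u}" unfolding E_def by blast
  qed (use Emeas fm in auto)
  show ?thesis using ev
  proof (rule eventually_mono)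
    fix n assume "b - a - e < measure lborel (E n)"
    then show "b - a - e < measure lborel {u\<in>{a..b}. P n u}" using le[of n] by linarith
  qed
qed
lemma meas_set:
  fixes \<phi> :: "real \<Rightarrow> real"
  assumes [measurable]: "\<phi> \<in> borel_measurable borel"
  shows "{u\<in>{a..b}. \<bar>\<phi> (c + u * d) - k - (p * u + q)\<bar> < \<eta>} \<in> sets lborel"
proof -
  have "(\<lambda>u. \<bar>\<phi> (c + u * d) - k - (p * u + q)\<bar>) \<in> borel_measurable borel" by measurable
  then have "(\<lambda>u. \<bar>\<phi> (c + u * d) - k - (p * u + q)\<bar>) -` {..<\<eta>} \<inter> space borel \<in> sets borel"
    by (rule measurable_sets) simp
  then have "{a..b} \<inter> ((\<lambda>u. \<bar>\<phi> (c + u * d) - k - (p * u + q)\<bar>) -` {..<\<eta>} \<inter> space borel) \<in> sets borel"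
    by (intro sets.Int) simp_all
  moreover have "{a..b} \<inter> ((\<lambda>u. \<bar>\<phi> (c + u * d) - k - (p * u + q)\<bar>) -` {..<\<eta>} \<inter> space borel) = {u\<in>{a..b}. \<bar>\<phi> (c + u * d) - k - (p * u + q)\<bar> < \<eta>}"
    by auto
  ultimately show ?thesis by simp
qed
lemma affine_pre_meas:
  fixes B :: "real set" and c t :: real
  assumes B: "B \<in> sets borel"
  shows "{x. t + c * x \<in> B} \<in> sets lborel"
proof -
  have "(\<lambda>x. t + c * x) \<in> borel_measurable borel" by simp
  then have "(\<lambda>x. t + c * x) -` B \<inter> space borel \<in> sets borel" using B by (rule measurable_sets)
  then show "{x. t + c * x \<in> B} \<in> sets lborel" by (simp add: vimage_def)
qed

lemma key:
  fixes \<phi> g :: "real \<Rightarrow> real" and \<alpha> \<epsilon> :: real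
  assumes \<phi>m: "\<phi> \<in> borel_measurable borel"
  and gpos: "\<And>t. g t > 0"
  and sn: "\<And>e. e > 0 \<Longrightarrow> eventually (\<lambda>t. \<forall>x\<in>{0..1}. \<bar>g (t + x * g t) / g t - 1\<bar> < e) at_top"
  and lim: "\<And>x. x \<ge> 0 \<Longrightarrow> ((\<lambda>t. \<phi> (t + x * g t) - \<phi> t) \<longlongrightarrow> \<alpha> * x) at_top"
  and \<epsilon>: "\<epsilon> > 0"
  shows "\<exists>\<delta>>0. eventually (\<lambda>t. \<forall>x\<in>{0..\<delta>}. \<bar>\<phi> (t + x * g t) - \<phi> t\<bar> < \<epsilon>) at_top"
proof (rule ccontr)
  assume "\<not> ?thesis"
  then have H0: "\<not> eventually (\<lambda>t. \<forall>x\<in>{0..\<delta>}. \<bar>\<phi> (t + x * g t) - \<phi> t\<bar> < \<epsilon>) at_top" if "\<delta> > 0" for \<delta>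
    using that by blast
  have H: "\<exists>t\<ge>N. \<exists>x\<in>{0..\<delta>}. \<bar>\<phi> (t + x * g t) - \<phi> t\<bar> \<ge> \<epsilon>" if "\<delta> > 0" for \<delta> N
  proof -
    have "\<not> (\<forall>t\<ge>N. \<forall>x\<in>{0..\<delta>}. \<bar>\<phi> (t + x * g t) - \<phi> t\<bar> < \<epsilon>)"
      using H0[OF that] unfolding eventually_at_top_linorder by blast
    then show ?thesis by (simp add: not_less)
  qed
  have "\<forall>n. \<exists>t. \<exists>x. t \<ge> real n \<and> x \<in> {0..inverse (real (Suc n))} \<and> \<bar>\<phi> (t + x * g t) - \<phi> t\<bar> \<ge> \<epsilon>"
  proof
    fix n
    obtain t where "t \<ge> real n" "\<exists>x\<in>{0..inverse (real (Suc n))}. \<bar>\<phi> (t + x * g t) - \<phi> t\<bar> \<ge> \<epsilon>"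
      using H[of "inverse (real (Suc n))" "real n"] by auto
    then show "\<exists>t. \<exists>x. t \<ge> real n \<and> x \<in> {0..inverse (real (Suc n))} \<and> \<bar>\<phi> (t + x * g t) - \<phi> t\<bar> \<ge> \<epsilon>"
      by blast
  qed
  then obtain tt where "\<forall>n. \<exists>x. tt n \<ge> real n \<and> x \<in> {0..inverse (real (Suc n))} \<and> \<bar>\<phi> (tt n + x * g (tt n)) - \<phi> (tt n)\<bar> \<ge> \<epsilon>"
    by (rule choice[THEN exE])
  then obtain xx where TT: "\<forall>n. tt n \<ge> real n \<and> xx n \<in> {0..inverse (real (Suc n))} \<and> \<bar>\<phi> (tt n + xx n * g (tt n)) - \<phi> (tt n)\<bar> \<ge> \<epsilon>"
    by (rule choice[THEN exE])
  have T1: "\<And>n. tt n \<ge> real n" and T2: "\<And>n. xx n \<in> {0..inverse (real (Suc n))}"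
    and T3: "\<And>n. \<bar>\<phi> (tt n + xx n * g (tt n)) - \<phi> (tt n)\<bar> \<ge> \<epsilon>" using TT by blast+
  define ss where "ss n = tt n + xx n * g (tt n)" for n
  define r where "r n = g (ss n) / g (tt n)" for n
  have xx0: "xx n \<ge> 0" for n using T2[of n] by auto
  have ttlim: "filterlim tt at_top sequentially"
    by (rule filterlim_at_top_mono[OF filterlim_real_sequentially]) (use T1 in auto)
  have sslim: "filterlim ss at_top sequentially"
  proof (rule filterlim_at_top_mono[OF ttlim])
    show "\<forall>\<^sub>F n in sequentially. tt n \<le> ss n"
    proof (rule always_eventually, rule allI)
      fix n
      have "0 \<le> xx n * g (tt n)" using xx0[of n] gpos[of "tt n"] by simp
      then show "tt n \<le> ss n" by (simp add: ss_def)
    qed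
  qed
  have xxlim: "xx \<longlonglongrightarrow> 0"
  proof (rule real_tendsto_sandwich[of "\<lambda>_. 0" _ _ "\<lambda>n. inverse (real (Suc n))"])
    show "(\<lambda>n. inverse (real (Suc n))) \<longlonglongrightarrow> 0" by (rule LIMSEQ_inverse_real_of_nat)
  qed (use T2 in auto)
  have rlim: "r \<longlonglongrightarrow> 1"
    unfolding tendsto_iff
  proof (intro allI impI)
    fix e :: real assume e: "e > 0"
    have ev1: "eventually (\<lambda>n. \<forall>x\<in>{0..1}. \<bar>g (tt n + x * g (tt n)) / g (tt n) - 1\<bar> < e) sequentially"
      using filterlim_iff[THEN iffD1, OF ttlim] sn[OF e] by blast
    have ev2: "eventually (\<lambda>n. xx n \<le> 1) sequentially"
      using order_tendstoD(2)[OF xxlim, of 1] by (rule eventually_mono) simp_all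
    show "eventually (\<lambda>n. dist (r n) 1 < e) sequentially"
      using ev1 ev2
    proof eventually_elim
      case (elim n)
      then show ?case using xx0[of n] by (auto simp: r_def ss_def dist_real_def)
    qed
  qed
  define \<eta> where "\<eta> = \<epsilon> / 4"
  have \<eta>: "\<eta> > 0" using \<epsilon> by (simp add: \<eta>_def)
  define A where "A n = {u\<in>{0..2}. \<bar>\<phi> (tt n + u * g (tt n)) - \<phi> (tt n) - (\<alpha> * u + 0)\<bar> < \<eta>}" for n
  define Q where "Q n = {w\<in>{0..3/2}. \<bar>\<phi> (ss n + w * g (ss n)) - \<phi> (ss n) - (\<alpha> * w + 0)\<bar> < \<eta>}" for n
  define B where "B n = {u\<in>{0..2}. \<bar>\<phi> (tt n + u * g (tt n)) - \<phi> (ss n) - ((\<alpha> / r n) * u + (- \<alpha> * xx n / r n))\<bar> < \<eta>}" for n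
  have Am: "A n \<in> sets lborel" for n unfolding A_def by (rule meas_set[OF \<phi>m])
  have Qm: "Q n \<in> sets lborel" for n unfolding Q_def by (rule meas_set[OF \<phi>m])
  have Bm: "B n \<in> sets lborel" for n unfolding B_def by (rule meas_set[OF \<phi>m])
  have evA: "eventually (\<lambda>n. measure lborel (A n) > 2 - 0 - 1/2) sequentially"
    unfolding A_def
  proof (rule meas_pw)
    fix u :: real assume u: "u \<in> {0..2}"
    have "((\<lambda>n. \<phi> (tt n + u * g (tt n)) - \<phi> (tt n)) \<longlongrightarrow> \<alpha> * u) sequentially"
      using filterlim_compose[OF lim ttlim, of u] u by simp
    from tendstoD[OF this \<eta>]
    show "eventually (\<lambda>n. \<bar>\<phi> (tt n + u * g (tt n)) - \<phi> (tt n) - (\<alpha> * u + 0)\<bar> < \<eta>) sequentially"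
      by (simp add: dist_real_def)
  qed (use Am[unfolded A_def] in simp_all)
  have evQ: "eventually (\<lambda>n. measure lborel (Q n) > 3/2 - 0 - 1/4) sequentially"
    unfolding Q_def
  proof (rule meas_pw)
    fix u :: real assume u: "u \<in> {0..3/2}"
    have "((\<lambda>n. \<phi> (ss n + u * g (ss n)) - \<phi> (ss n)) \<longlongrightarrow> \<alpha> * u) sequentially"
      using filterlim_compose[OF lim sslim, of u] u by simp
    from tendstoD[OF this \<eta>]
    show "eventually (\<lambda>n. \<bar>\<phi> (ss n + u * g (ss n)) - \<phi> (ss n) - (\<alpha> * u + 0)\<bar> < \<eta>) sequentially"
      by (simp add: dist_real_def)
  qed (use Qm[unfolded Q_def] in simp_all)
  define d where "d n = 2 * \<bar>\<alpha>\<bar> * \<bar>1 - 1 / r n\<bar> + \<bar>\<alpha>\<bar> * xx n / r n" for n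
  have dlim: "d \<longlonglongrightarrow> 2 * \<bar>\<alpha>\<bar> * \<bar>1 - 1 / 1\<bar> + \<bar>\<alpha>\<bar> * 0 / 1"
    unfolding d_def by (intro tendsto_intros rlim xxlim) simp_all
  have evd: "eventually (\<lambda>n. d n < \<eta>) sequentially"
    using order_tendstoD(2)[OF dlim, of \<eta>] \<eta> by simp
  have evr1: "eventually (\<lambda>n. r n > 9/10) sequentially"
    using order_tendstoD(1)[OF rlim, of "9/10"] by simp
  have evr2: "eventually (\<lambda>n. r n < 11/10) sequentially"
    using order_tendstoD(2)[OF rlim, of "11/10"] by simp
  have evx: "eventually (\<lambda>n. xx n < 1/10) sequentially"
    using order_tendstoD(2)[OF xxlim, of "1/10"] by simp
  have "eventually (\<lambda>n. measure lborel (A n) > 2 - 0 - 1/2 \<and> measure lborel (Q n) > 3/2 - 0 - 1/4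
     \<and> d n < \<eta> \<and> r n > 9/10 \<and> r n < 11/10 \<and> xx n < 1/10) sequentially"
    using evA evQ evd evr1 evr2 evx by (intro eventually_conj)
  then obtain n where nA: "measure lborel (A n) > 3/2" and nQ: "measure lborel (Q n) > 5/4"
    and nd: "d n < \<eta>" and nr1: "r n > 9/10" and nr2: "r n < 11/10" and nx: "xx n < 1/10"
    unfolding eventually_sequentially by auto
  have gt: "g (tt n) > 0" "g (ss n) > 0" using gpos by auto
  have rg: "r n * g (tt n) = g (ss n)" using gt by (simp add: r_def)
  have sub: "Q n \<subseteq> {w. xx n + r n * w \<in> B n}"
  proof
    fix w assume w: "w \<in> Q n"
    have e1: "tt n + (xx n + r n * w) * g (tt n) = ss n + w * g (ss n)"
      using rg by (simp add: ss_def algebra_simps)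
    have e2: "(\<alpha> / r n) * (xx n + r n * w) + (- \<alpha> * xx n / r n) = \<alpha> * w"
      using nr1 by (simp add: field_simps)
    have "xx n + r n * w \<in> {0..2}"
    proof -
      have "0 \<le> w" "w \<le> 3/2" using w by (auto simp: Q_def)
      moreover have "r n * w \<le> 11/10 * (3/2)"
        using \<open>w \<le> 3/2\<close> \<open>0 \<le> w\<close> nr2 nr1 by (intro mult_mono) auto
      ultimately show ?thesis using xx0[of n] nx nr1 by auto
    qed
    moreover have "\<bar>\<phi> (tt n + (xx n + r n * w) * g (tt n)) - \<phi> (ss n) - ((\<alpha> / r n) * (xx n + r n * w) + (- \<alpha> * xx n / r n))\<bar> < \<eta>"
      unfolding e1 e2 using w by (simp add: Q_def)
    ultimately show "w \<in> {w. xx n + r n * w \<in> B n}"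
      unfolding B_def mem_Collect_eq by blast
  qed
  have I02: "{0..2::real} \<in> fmeasurable lborel" by (rule fmeasurable_compact) simp
  have fin: "S \<subseteq> {0..2} \<Longrightarrow> S \<in> sets lborel \<Longrightarrow> S \<in> fmeasurable lborel" for S :: "real set"
    by (rule fmeasurableI2[OF I02])
  have AB: "A n \<inter> B n \<noteq> {}"
  proof
    assume dis: "A n \<inter> B n = {}"
    have Asub: "A n \<subseteq> {0..2}" unfolding A_def by blast
    have Bsub: "B n \<subseteq> {0..2}" unfolding B_def by blast
    have Af: "A n \<in> fmeasurable lborel" by (rule fin[OF Asub Am])
    have Bf: "B n \<in> fmeasurable lborel" by (rule fin[OF Bsub Bm])
    have "emeasure lborel (B n) = ennreal (r n) * emeasure lborel {w. xx n + r n * w \<in> B n}"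
      by (rule affine_meas) (use Bm nr1 in auto)
    also have "emeasure lborel {w. xx n + r n * w \<in> B n} \<ge> emeasure lborel (Q n)"
      by (rule emeasure_mono[OF sub]) (rule affine_pre_meas, use Bm in simp)
    hence "ennreal (r n) * emeasure lborel {w. xx n + r n * w \<in> B n} \<ge> ennreal (r n) * emeasure lborel (Q n)"
      by (rule mult_left_mono) simp
    finally have "ennreal (r n) * emeasure lborel (Q n) \<le> emeasure lborel (B n)" .
    then have "enn2real (ennreal (r n) * emeasure lborel (Q n)) \<le> enn2real (emeasure lborel (B n))"
      by (rule enn2real_mono) (use Bf in \<open>simp add: fmeasurable_def\<close>)
    then have mB: "r n * measure lborel (Q n) \<le> measure lborel (B n)"
      using nr1 by (simp add: measure_def enn2real_mult)
    have "9/10 * (5/4) \<le> r n * measure lborel (Q n)"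
      using nr1 nQ by (intro mult_mono) auto
    with mB have mB2: "measure lborel (B n) > 1" by simp
    have "measure lborel (A n \<union> B n) = measure lborel (A n) + measure lborel (B n)"
      by (rule measure_Union) (use Af Bf dis in \<open>auto simp: fmeasurable_def\<close>)
    moreover have "measure lborel (A n \<union> B n) \<le> measure lborel {0..2::real}"
      by (rule measure_mono_fmeasurable) (use Asub Bsub Am Bm I02 in blast)+
    ultimately show False using nA mB2 by simp
  qed
  then obtain u where uA: "u \<in> A n" and uB: "u \<in> B n" by blast
  have u: "0 \<le> u" "u \<le> 2" using uA by (auto simp: A_def)
  have i1: "\<bar>\<phi> (tt n + u * g (tt n)) - \<phi> (tt n) - \<alpha> * u\<bar> < \<eta>" using uA by (simp add: A_def)
  have i2: "\<bar>\<phi> (tt n + u * g (tt n)) - \<phi> (ss n) - ((\<alpha> / r n) * u + (- \<alpha> * xx n / r n))\<bar> < \<eta>"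
    using uB by (simp add: B_def)
  have i3: "\<bar>\<alpha> * u - ((\<alpha> / r n) * u + (- \<alpha> * xx n / r n))\<bar> \<le> d n"
  proof -
    have "\<alpha> * u - ((\<alpha> / r n) * u + (- \<alpha> * xx n / r n)) = \<alpha> * u * (1 - 1 / r n) + \<alpha> * xx n / r n"
      using nr1 by (simp add: field_simps)
    also have "\<bar>\<dots>\<bar> \<le> \<bar>\<alpha> * u * (1 - 1 / r n)\<bar> + \<bar>\<alpha> * xx n / r n\<bar>" by (rule abs_triangle_ineq)
    also have "\<bar>\<alpha> * u * (1 - 1 / r n)\<bar> = \<bar>\<alpha>\<bar> * u * \<bar>1 - 1 / r n\<bar>" using u by (simp add: abs_mult)
    also have "\<dots> \<le> \<bar>\<alpha>\<bar> * 2 * \<bar>1 - 1 / r n\<bar>" using u by (intro mult_right_mono mult_left_mono) auto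
    also have "\<bar>\<alpha> * xx n / r n\<bar> = \<bar>\<alpha>\<bar> * xx n / r n" using xx0[of n] nr1 by (simp add: abs_mult)
    finally show ?thesis by (simp add: d_def)
  qed
  have "\<bar>\<phi> (ss n) - \<phi> (tt n)\<bar> < 3 * \<eta>" using i1 i2 i3 nd by linarith
  moreover have "\<bar>\<phi> (ss n) - \<phi> (tt n)\<bar> \<ge> \<epsilon>" using T3[of n] by (simp add: ss_def)
  ultimately show False using \<epsilon> by (simp add: \<eta>_def)
qed

lemma chain:
  fixes g :: "real \<Rightarrow> real" and P :: "real \<Rightarrow> bool" and \<delta> T t s m :: real
  assumes \<delta>: "\<delta> > 0" and gpos: "\<And>t. g t > 0"
  and m: "m > 0" and lb: "\<And>c. T \<le> c \<Longrightarrow> c \<le> s \<Longrightarrow> g c \<ge> m"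
  and step: "\<And>c. T \<le> c \<Longrightarrow> P c \<Longrightarrow> P (c + \<delta> * g c)"
  and t: "T \<le> t" "t \<le> s" "P t"
  shows "\<exists>c. t \<le> c \<and> c \<le> s \<and> P c \<and> s < c + \<delta> * g c"
proof -
  define F where "F = (\<lambda>c. c + \<delta> * g c)"
  define cc where "cc k = (F ^^ k) t" for k
  have cc0: "cc 0 = t" by (simp add: cc_def)
  have ccS: "cc (Suc k) = cc k + \<delta> * g (cc k)" for k by (simp add: cc_def F_def)
  have inc: "cc k \<le> cc (Suc k)" for k
  proof -
    have "0 < \<delta> * g (cc k)" using \<delta> gpos by simp
    then show ?thesis by (simp add: ccS)
  qed
  have ge: "t \<le> cc k" for k
  proof (induction k)
    case 0 then show ?case by (simp add: cc0)
  next
    case (Suc k) then show ?case using inc[of k] by linarith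
  qed
  have Pk: "P (cc k)" for k
  proof (induction k)
    case 0 then show ?case using t by (simp add: cc0)
  next
    case (Suc k)
    have "T \<le> cc k" using ge[of k] t by linarith
    then show ?case using step[OF _ Suc] by (simp add: ccS)
  qed
  have lower: "cc k \<le> s \<longrightarrow> t + real k * (\<delta> * m) \<le> cc k" for k
  proof (induction k)
    case 0 then show ?case by (simp add: cc0)
  next
    case (Suc k)
    show ?case
    proof
      assume s: "cc (Suc k) \<le> s"
      then have ks: "cc k \<le> s" using inc[of k] by linarith
      with Suc have IH: "t + real k * (\<delta> * m) \<le> cc k" by blast
      have "T \<le> cc k" using ge[of k] t by linarith
      then have "g (cc k) \<ge> m" using lb ks by blast
      then have "\<delta> * m \<le> \<delta> * g (cc k)" using \<delta> by simp
      then show "t + real (Suc k) * (\<delta> * m) \<le> cc (Suc k)"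
        using IH by (simp add: ccS algebra_simps)
    qed
  qed
  obtain K where K: "s - t < real K * (\<delta> * m)"
    using reals_Archimedean3[of "\<delta> * m"] \<delta> m by auto
  have exK: "s < cc K"
  proof (rule ccontr)
    assume "\<not> s < cc K"
    then have "cc K \<le> s" by simp
    with lower[of K] K show False by linarith
  qed
  define k0 where "k0 = (LEAST k. s < cc k)"
  have k0: "s < cc k0" unfolding k0_def by (rule LeastI[of _ K]) (rule exK)
  have "k0 \<noteq> 0"
  proof
    assume "k0 = 0"
    then show False using k0 t cc0 by simp
  qed
  then obtain j where j: "k0 = Suc j" by (cases k0) auto
  have "\<not> s < cc j"
  proof
    assume "s < cc j"
    then have "k0 \<le> j" unfolding k0_def by (rule Least_le)
    then show False using j by simp
  qed
  then have "cc j \<le> s" by simp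
  moreover have "s < cc j + \<delta> * g (cc j)" using k0 j ccS by simp
  ultimately show ?thesis using ge[of j] Pk[of j] by blast
qed

lemma bound_dec:
  fixes \<phi> g :: "real \<Rightarrow> real" and \<alpha> e Tg :: real
  assumes \<phi>m: "\<phi> \<in> borel_measurable borel"
  and gpos: "\<And>t. g t > 0"
  and sn: "\<And>e. e > 0 \<Longrightarrow> eventually (\<lambda>t. \<forall>x\<in>{0..1}. \<bar>g (t + x * g t) / g t - 1\<bar> < e) at_top"
  and lim: "\<And>x. x \<ge> 0 \<Longrightarrow> ((\<lambda>t. \<phi> (t + x * g t) - \<phi> t) \<longlongrightarrow> \<alpha> * x) at_top"
  and \<alpha>: "\<alpha> < 0"
  and gdec: "\<And>s t. Tg \<le> s \<Longrightarrow> s \<le> t \<Longrightarrow> g t \<le> g s"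
  and e: "e > 0"
  shows "\<exists>T. \<forall>t\<ge>T. \<forall>s\<ge>t. \<phi> s < \<phi> t + e"
proof -
  obtain \<delta> where \<delta>: "\<delta> > 0" and ev1: "eventually (\<lambda>t. \<forall>x\<in>{0..\<delta>}. \<bar>\<phi> (t + x * g t) - \<phi> t\<bar> < e) at_top"
    using key[OF \<phi>m gpos sn lim e] by blast
  have "\<alpha> * \<delta> < 0" using \<alpha> \<delta> by (simp add: mult_neg_pos)
  moreover have l: "((\<lambda>t. \<phi> (t + \<delta> * g t) - \<phi> t) \<longlongrightarrow> \<alpha> * \<delta>) at_top" using lim \<delta> by simp
  ultimately have ev2: "eventually (\<lambda>t. \<phi> (t + \<delta> * g t) - \<phi> t < 0) at_top"
    using order_tendstoD(2)[OF l] by blast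
  obtain T where T: "\<And>t. t \<ge> T \<Longrightarrow> (\<forall>x\<in>{0..\<delta>}. \<bar>\<phi> (t + x * g t) - \<phi> t\<bar> < e) \<and> \<phi> (t + \<delta> * g t) - \<phi> t < 0"
    using eventually_conj[OF ev1 ev2] unfolding eventually_at_top_linorder by blast
  show ?thesis
  proof (intro exI allI impI)
    fix t s assume t: "max T Tg \<le> t" and s: "t \<le> s"
    have "\<exists>c. t \<le> c \<and> c \<le> s \<and> \<phi> c \<le> \<phi> t \<and> s < c + \<delta> * g c"
    proof (rule chain[of \<delta> g "g s" "max T Tg" s "\<lambda>c. \<phi> c \<le> \<phi> t" t])
      fix c assume "max T Tg \<le> c" "\<phi> c \<le> \<phi> t"
      then show "\<phi> (c + \<delta> * g c) \<le> \<phi> t" using T[of c] by auto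
    next
      fix c assume "max T Tg \<le> c" "c \<le> s"
      then show "g s \<le> g c" using gdec[of c s] by auto
    qed (use \<delta> gpos t s in auto)
    then obtain c where c: "t \<le> c" "c \<le> s" "\<phi> c \<le> \<phi> t" "s < c + \<delta> * g c" by blast
    define x where "x = (s - c) / g c"
    have gc: "g c > 0" by (rule gpos)
    have xs: "s = c + x * g c" using gc by (simp add: x_def)
    have "x \<in> {0..\<delta>}" using c gc by (auto simp: x_def field_simps)
    then have "\<bar>\<phi> (c + x * g c) - \<phi> c\<bar> < e" using T[of c] c t by auto
    then show "\<phi> s < \<phi> t + e" using xs c by auto
  qed
qed

lemma bound_inc:
  fixes \<phi> g :: "real \<Rightarrow> real" and \<alpha> e Tg :: real
  assumes \<phi>m: "\<phi> \<in> borel_measurable borel"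
  and gpos: "\<And>t. g t > 0"
  and sn: "\<And>e. e > 0 \<Longrightarrow> eventually (\<lambda>t. \<forall>x\<in>{0..1}. \<bar>g (t + x * g t) / g t - 1\<bar> < e) at_top"
  and lim: "\<And>x. x \<ge> 0 \<Longrightarrow> ((\<lambda>t. \<phi> (t + x * g t) - \<phi> t) \<longlongrightarrow> \<alpha> * x) at_top"
  and \<alpha>: "\<alpha> > 0"
  and ginc: "\<And>s t. Tg \<le> s \<Longrightarrow> s \<le> t \<Longrightarrow> g s \<le> g t"
  and e: "e > 0"
  shows "\<exists>T. \<forall>t\<ge>T. \<forall>s\<ge>t. \<phi> s > \<phi> t - e"
proof -
  obtain \<delta> where \<delta>: "\<delta> > 0" and ev1: "eventually (\<lambda>t. \<forall>x\<in>{0..\<delta>}. \<bar>\<phi> (t + x * g t) - \<phi> t\<bar> < e) at_top"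
    using key[OF \<phi>m gpos sn lim e] by blast
  have "\<alpha> * \<delta> > 0" using \<alpha> \<delta> by simp
  moreover have l: "((\<lambda>t. \<phi> (t + \<delta> * g t) - \<phi> t) \<longlongrightarrow> \<alpha> * \<delta>) at_top" using lim \<delta> by simp
  ultimately have ev2: "eventually (\<lambda>t. \<phi> (t + \<delta> * g t) - \<phi> t > 0) at_top"
    using order_tendstoD(1)[OF l] by blast
  obtain T where T: "\<And>t. t \<ge> T \<Longrightarrow> (\<forall>x\<in>{0..\<delta>}. \<bar>\<phi> (t + x * g t) - \<phi> t\<bar> < e) \<and> \<phi> (t + \<delta> * g t) - \<phi> t > 0"
    using eventually_conj[OF ev1 ev2] unfolding eventually_at_top_linorder by blast
  show ?thesis
  proof (intro exI allI impI)
    fix t s assume t: "max T Tg \<le> t" and s: "t \<le> s"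
    have "\<exists>c. t \<le> c \<and> c \<le> s \<and> \<phi> c \<ge> \<phi> t \<and> s < c + \<delta> * g c"
    proof (rule chain[of \<delta> g "g (max T Tg)" "max T Tg" s "\<lambda>c. \<phi> c \<ge> \<phi> t" t])
      fix c assume "max T Tg \<le> c" "\<phi> c \<ge> \<phi> t"
      then show "\<phi> (c + \<delta> * g c) \<ge> \<phi> t" using T[of c] by auto
    next
      fix c assume "max T Tg \<le> c" "c \<le> s"
      then show "g (max T Tg) \<le> g c" using ginc[of "max T Tg" c] by auto
    qed (use \<delta> gpos t s in auto)
    then obtain c where c: "t \<le> c" "c \<le> s" "\<phi> c \<ge> \<phi> t" "s < c + \<delta> * g c" by blast
    define x where "x = (s - c) / g c"
    have gc: "g c > 0" by (rule gpos)
    have xs: "s = c + x * g c" using gc by (simp add: x_def)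
    have "x \<in> {0..\<delta>}" using c gc by (auto simp: x_def field_simps)
    then have "\<bar>\<phi> (c + x * g c) - \<phi> c\<bar> < e" using T[of c] c t by auto
    then show "\<phi> s > \<phi> t - e" using xs c by auto
  qed
qed

theorem mainTheorem8:
  fixes g f :: "real \<Rightarrow> real" and \<alpha> :: real
  assumes "self_neglecting g" and "f \<in> Gamma \<alpha> g"
  shows "(ult_decreasing g \<and> \<alpha> < 0 \<longrightarrow> (\<exists>h. tail_equivalent f h \<and> ult_decreasing h))
       \<and> (ult_increasing g \<and> \<alpha> > 0 \<longrightarrow> (\<exists>h. tail_equivalent f h \<and> ult_increasing h))"
proof -
  from assms(1) have gpos: "\<And>t. g t > 0"
    and unif: "\<And>a b e. e > 0 \<Longrightarrow> eventually (\<lambda>t. \<forall>x\<in>{a..b}. \<bar>g (t + x * g t) / g t - 1\<bar> < e) at_top"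
    unfolding self_neglecting_def by blast+
  have sn: "\<And>e. e > 0 \<Longrightarrow> eventually (\<lambda>t. \<forall>x\<in>{0..1}. \<bar>g (t + x * g t) / g t - 1\<bar> < e) at_top"
    using unif by blast
  from assms(2) have fm: "f \<in> borel_measurable borel" and fpos: "eventually (\<lambda>t. f t > 0) at_top"
    and flim: "\<And>x. ((\<lambda>t. f (t + x * g t) / f t) \<longlongrightarrow> exp (\<alpha> * x)) at_top"
    unfolding Gamma_def by blast+
  obtain T0 where T0: "\<And>t. t \<ge> T0 \<Longrightarrow> f t > 0" using fpos unfolding eventually_at_top_linorder by blast
  define \<phi> where "\<phi> = (\<lambda>t. ln (f t))"
  have \<phi>m: "\<phi> \<in> borel_measurable borel" unfolding \<phi>_def using fm by measurable
  have lim: "((\<lambda>t. \<phi> (t + x * g t) - \<phi> t) \<longlongrightarrow> \<alpha> * x) at_top" if x: "x \<ge> 0" for x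
  proof -
    have "((\<lambda>t. ln (f (t + x * g t) / f t)) \<longlongrightarrow> ln (exp (\<alpha> * x))) at_top"
      by (rule tendsto_ln[OF flim]) simp
    then have l: "((\<lambda>t. ln (f (t + x * g t) / f t)) \<longlongrightarrow> \<alpha> * x) at_top" by simp
    have ev: "eventually (\<lambda>t. ln (f (t + x * g t) / f t) = \<phi> (t + x * g t) - \<phi> t) at_top"
      unfolding eventually_at_top_linorder
    proof (intro exI allI impI)
      fix t assume t: "T0 \<le> t"
      have "0 \<le> x * g t" using x gpos[of t] by simp
      then have "f (t + x * g t) > 0" using T0[of "t + x * g t"] t by simp
      then show "ln (f (t + x * g t) / f t) = \<phi> (t + x * g t) - \<phi> t"
        using T0[OF t] by (simp add: \<phi>_def ln_div)
    qed
    show ?thesis by (rule Lim_transform_eventually[OF l ev])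
  qed
  have exp\<phi>: "exp (\<phi> t) = f t" if "t \<ge> T0" for t using T0[OF that] by (simp add: \<phi>_def)
  show ?thesis
  proof (intro conjI impI)
    assume H: "ult_decreasing g \<and> \<alpha> < 0"
    then obtain Tg where gdec: "\<And>s t. Tg \<le> s \<Longrightarrow> s \<le> t \<Longrightarrow> g t \<le> g s"
      unfolding ult_decreasing_def by blast
    have B: "\<exists>T. \<forall>t\<ge>T. \<forall>s\<ge>t. f s \<le> exp e * f t" if e: "e > 0" for e
    proof -
      obtain T where T: "\<forall>t\<ge>T. \<forall>s\<ge>t. \<phi> s < \<phi> t + e"
        using bound_dec[OF \<phi>m gpos sn lim _ gdec e] H by blast
      show ?thesis
      proof (intro exI allI impI)
        fix t s assume t: "max T T0 \<le> t" and s: "t \<le> s"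
        have "\<phi> s < \<phi> t + e" using T t s by auto
        then have "exp (\<phi> s) \<le> exp (\<phi> t + e)" by simp
        moreover have "exp (\<phi> s) = f s" "exp (\<phi> t) = f t" using exp\<phi> t s by auto
        ultimately show "f s \<le> exp e * f t" by (simp add: exp_add mult.commute)
      qed
    qed
    obtain T1 where T1: "\<forall>t\<ge>T1. \<forall>s\<ge>t. f s \<le> exp 1 * f t" using B[of 1] by auto
    define h where "h t = Sup (f ` {t..})" for t
    have bdd: "bdd_above (f ` {t..})" if "t \<ge> T1" for t
      by (rule bdd_aboveI2[of _ _ "exp 1 * f t"]) (use T1 that in auto)
    have hge: "f t \<le> h t" if "t \<ge> T1" for t
      unfolding h_def by (rule cSup_upper) (use bdd that in auto)
    have hle: "h t \<le> exp e * f t" if "t \<ge> T" "T \<ge> T1" and "\<forall>t\<ge>T. \<forall>s\<ge>t. f s \<le> exp e * f t" for t T e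
      unfolding h_def by (rule cSup_least) (use that in auto)
    have "ult_decreasing h" unfolding ult_decreasing_def
    proof (intro exI allI impI)
      fix s t assume st: "T1 \<le> s" "s \<le> t"
      show "h t \<le> h s" unfolding h_def by (rule cSup_subset_mono) (use bdd st in auto)
    qed
    moreover have "tail_equivalent f h" unfolding tail_equivalent_def tendsto_iff
    proof (intro allI impI)
      fix e :: real assume e: "e > 0"
      obtain T where T: "\<forall>t\<ge>T. \<forall>s\<ge>t. f s \<le> exp (e/2) * f t" using B[of "e/2"] e by auto
      show "eventually (\<lambda>t. dist (f t / h t) 1 < e) at_top" unfolding eventually_at_top_linorder
      proof (intro exI allI impI)
        fix t assume t: "max (max T T1) T0 \<le> t"
        have ft: "f t > 0" using T0 t by auto
        have h1: "f t \<le> h t" using hge t by auto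
        have T': "\<forall>t\<ge>max T T1. \<forall>s\<ge>t. f s \<le> exp (e/2) * f t" using T by auto
        have h2: "h t \<le> exp (e/2) * f t" using hle[of "max T T1" t "e/2", OF _ _ T'] t by auto
        have hp: "h t > 0" using ft h1 by linarith
        have r1: "f t / h t \<le> 1" using h1 hp by simp
        have "exp (-(e/2)) * h t \<le> exp (-(e/2)) * (exp (e/2) * f t)" using h2 by simp
        also have "\<dots> = f t" by (simp add: exp_minus field_simps)
        finally have r2: "exp (-(e/2)) \<le> f t / h t" using hp by (simp add: field_simps)
        have "1 - e/2 \<le> exp (-(e/2))" using exp_ge_add_one_self[of "-(e/2)"] by simp
        then show "dist (f t / h t) 1 < e" using r1 r2 e unfolding dist_real_def by linarith
      qed
    qed
    ultimately show "\<exists>h. tail_equivalent f h \<and> ult_decreasing h" by blast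
  next
    assume H: "ult_increasing g \<and> \<alpha> > 0"
    then obtain Tg where ginc: "\<And>s t. Tg \<le> s \<Longrightarrow> s \<le> t \<Longrightarrow> g s \<le> g t"
      unfolding ult_increasing_def by blast
    have B: "\<exists>T. \<forall>t\<ge>T. \<forall>s\<ge>t. exp (-e) * f t \<le> f s" if e: "e > 0" for e
    proof -
      obtain T where T: "\<forall>t\<ge>T. \<forall>s\<ge>t. \<phi> s > \<phi> t - e"
        using bound_inc[OF \<phi>m gpos sn lim _ ginc e] H by blast
      show ?thesis
      proof (intro exI allI impI)
        fix t s assume t: "max T T0 \<le> t" and s: "t \<le> s"
        have "\<phi> s > \<phi> t - e" using T t s by auto
        then have "exp (\<phi> t + (- e)) \<le> exp (\<phi> s)" by simp
        moreover have "exp (\<phi> s) = f s" "exp (\<phi> t) = f t" using exp\<phi> t s by auto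
        ultimately show "exp (-e) * f t \<le> f s" by (simp only: exp_add mult.commute)
      qed
    qed
    define h where "h t = Inf (f ` {t..})" for t
    have bdd: "bdd_below (f ` {t..})" if "t \<ge> T0" for t
      by (rule bdd_belowI2[of _ 0]) (use T0 that in \<open>auto intro: less_imp_le\<close>)
    have hle: "h t \<le> f t" if "t \<ge> T0" for t
      unfolding h_def by (rule cInf_lower) (use bdd that in auto)
    have hge: "exp (-e) * f t \<le> h t" if "t \<ge> T" and "\<forall>t\<ge>T. \<forall>s\<ge>t. exp (-e) * f t \<le> f s" for t T e
      unfolding h_def by (rule cInf_greatest) (use that in auto)
    have "ult_increasing h" unfolding ult_increasing_def
    proof (intro exI allI impI)
      fix s t assume st: "T0 \<le> s" "s \<le> t"
      show "h s \<le> h t" unfolding h_def by (rule cInf_superset_mono) (use bdd st in auto)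
    qed
    moreover have "tail_equivalent f h" unfolding tail_equivalent_def tendsto_iff
    proof (intro allI impI)
      fix e :: real assume e: "e > 0"
      define e' where "e' = ln (1 + e/2)"
      have e'pos: "e' > 0" using e by (simp add: e'_def)
      have expe': "exp e' = 1 + e/2" using e by (simp add: e'_def)
      obtain T where T: "\<forall>t\<ge>T. \<forall>s\<ge>t. exp (-e') * f t \<le> f s" using B[OF e'pos] by auto
      show "eventually (\<lambda>t. dist (f t / h t) 1 < e) at_top" unfolding eventually_at_top_linorder
      proof (intro exI allI impI)
        fix t assume t: "max T T0 \<le> t"
        have ft: "f t > 0" using T0 t by auto
        have h1: "h t \<le> f t" using hle t by auto
        have h2: "exp (-e') * f t \<le> h t" using hge[of T t e'] T t by auto
        have hp: "h t > 0" using ft h2 by (smt (verit) exp_gt_zero mult_pos_pos)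
        have r1: "1 \<le> f t / h t" using h1 hp by simp
        have "f t = exp e' * (exp (-e') * f t)" by (simp add: exp_minus field_simps)
        also have "\<dots> \<le> exp e' * h t" using h2 by simp
        finally have r2: "f t / h t \<le> exp e'" using hp by (simp add: field_simps)
        then show "dist (f t / h t) 1 < e" using r1 e expe' unfolding dist_real_def by linarith
      qed
    qed
    ultimately show "\<exists>h. tail_equivalent f h \<and> ult_increasing h" by blast
  qed
qed

end
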